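(* Let $G$ be a connected graph and let $A\subseteq V(G)$ be such that the distance in $G$ between any two distinct members of $A$ is at least $3$. Then $\tilde{H}_k(\operatorname{ind}(G);\mathbf{k})=0$ for all $k\le|A|-2$.
   Context: All graphs are finite and simple; $\mathbf{k}$ is a fixed field. Distance is the graph (shortest-path) distance. $\operatorname{ind}(G)$ is the simplicial complex on $V(G)$ whose faces are the independent sets of $G$, and $\tilde H_k$ is reduced simplicial homology with coefficients in $\mathbf{k}$. *)

theory Defs
  imports Main
begin

definition simple_graph :: "'a set \<Rightarrow> ('a \<Rightarrow> 'a \<Rightarrow> bool) \<Rightarrow> bool" where
  "simple_graph V E \<longleftrightarrow> finite V \<and> (\<forall>x y. E x y \<longrightarrow> x \<in> V \<and> y \<in> V)
     \<and> (\<forall>x y. E x y \<longrightarrow> E y x) \<and> (\<forall>x. \<not> E x x)"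

fun walk :: "'a set \<Rightarrow> ('a \<Rightarrow> 'a \<Rightarrow> bool) \<Rightarrow> 'a list \<Rightarrow> bool" where
  "walk V E [] = False"
| "walk V E [x] = (x \<in> V)"
| "walk V E (x # y # xs) = (x \<in> V \<and> E x y \<and> walk V E (y # xs))"

definition graph_connected :: "'a set \<Rightarrow> ('a \<Rightarrow> 'a \<Rightarrow> bool) \<Rightarrow> bool" where
  "graph_connected V E \<longleftrightarrow>
     (\<forall>u\<in>V. \<forall>v\<in>V. \<exists>xs. walk V E xs \<and> hd xs = u \<and> last xs = v)"

definition gdist :: "'a set \<Rightarrow> ('a \<Rightarrow> 'a \<Rightarrow> bool) \<Rightarrow> 'a \<Rightarrow> 'a \<Rightarrow> nat" where
  "gdist V E u v = (LEAST n. \<exists>xs. walk V E xs \<and> hd xs = u \<and> last xs = v \<and> length xs = Suc n)"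

definition ind_complex :: "'a set \<Rightarrow> ('a \<Rightarrow> 'a \<Rightarrow> bool) \<Rightarrow> 'a set set" where
  "ind_complex V E = {S. S \<subseteq> V \<and> (\<forall>x\<in>S. \<forall>y\<in>S. \<not> E x y)}"

text \<open>A simplicial complex is given by its set of faces K (including the empty face).
  Simplices are oriented by the linear order on vertices. k-faces have k+1 vertices;
  the empty face is the unique (-1)-face (augmentation), giving reduced homology.\<close>

definition faces_dim :: "'a set set \<Rightarrow> int \<Rightarrow> 'a set set" where
  "faces_dim K k = {\<sigma> \<in> K. int (card \<sigma>) = k + 1}"

definition chains :: "'a set set \<Rightarrow> int \<Rightarrow> ('a set \<Rightarrow> 'k::field) set" where
  "chains K k = {c. \<forall>\<sigma>. \<sigma> \<notin> faces_dim K k \<longrightarrow> c \<sigma> = 0}"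

text \<open>Boundary map from k-chains to (k-1)-chains:
  the coefficient of tau in the boundary of (tau + v) is (-1)^(position of v).\<close>
definition boundary :: "'a::linorder set set \<Rightarrow> int \<Rightarrow> ('a set \<Rightarrow> 'k::field) \<Rightarrow> 'a set \<Rightarrow> 'k" where
  "boundary K k c \<tau> =
     (if \<tau> \<in> faces_dim K (k - 1) then
        (\<Sum>v \<in> {v \<in> \<Union>K. v \<notin> \<tau> \<and> insert v \<tau> \<in> K}.
           (-1) ^ card {w \<in> \<tau>. w < v} * c (insert v \<tau>))
      else 0)"

definition cycles :: "'a::linorder set set \<Rightarrow> int \<Rightarrow> ('a set \<Rightarrow> 'k::field) set" where
  "cycles K k = {c \<in> chains K k. \<forall>\<tau>. boundary K k c \<tau> = 0}"

definition boundaries :: "'a::linorder set set \<Rightarrow> int \<Rightarrow> ('a set \<Rightarrow> 'k::field) set" where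
  "boundaries K k = boundary K (k + 1) ` chains K (k + 1)"

definition reduced_homology_vanishes :: "'k::field itself \<Rightarrow> 'a::linorder set set \<Rightarrow> int \<Rightarrow> bool" where
  "reduced_homology_vanishes (TYPE('k)) K k \<longleftrightarrow>
     (cycles K k :: ('a set \<Rightarrow> 'k) set) \<subseteq> boundaries K k"

end

theory Submission
  imports Defs
begin


definition sgnv :: "'a::linorder \<Rightarrow> 'a set \<Rightarrow> 'k::field" where
  "sgnv v \<sigma> = (-1) ^ card {w \<in> \<sigma>. w < v}"

lemma sgnv_sq: "sgnv v \<sigma> * sgnv v \<sigma> = (1::'k::field)"
  unfolding sgnv_def by (simp add: power_mult_distrib[symmetric] flip: power_add)

lemma sgnv_nz: "sgnv v \<sigma> \<noteq> (0::'k::field)"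
  unfolding sgnv_def by simp

lemma card_lt_insert:
  assumes "finite \<sigma>" "v \<notin> \<sigma>"
  shows "card {w \<in> insert v \<sigma>. w < u} = card {w \<in> \<sigma>. w < u} + (if v < u then 1 else 0)"
proof -
  have f: "finite {w \<in> \<sigma>. w < u}" using assms by simp
  show ?thesis
  proof (cases "v < u")
    case True
    then have "{w \<in> insert v \<sigma>. w < u} = insert v {w \<in> \<sigma>. w < u}" by auto
    then show ?thesis using True f assms by simp
  next
    case False
    then have "{w \<in> insert v \<sigma>. w < u} = {w \<in> \<sigma>. w < u}" by auto
    then show ?thesis using False by simp
  qed
qed

lemma sgnv_swap:
  assumes "finite \<sigma>" "u \<notin> \<sigma>" "v \<notin> \<sigma>" "u \<noteq> v"
  shows "sgnv u (insert v \<sigma>) * sgnv v (insert u \<sigma>) = - (sgnv v \<sigma> * sgnv u \<sigma> :: 'k::field)"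
proof -
  have "(u < v) \<noteq> (v < u)" using assms(4) by auto
  then show ?thesis
    unfolding sgnv_def card_lt_insert[OF assms(1,3)] card_lt_insert[OF assms(1,2)]
    by (auto simp: power_add)
qed


lemma ind_finite_face: "finite V \<Longrightarrow> \<sigma> \<in> ind_complex V E \<Longrightarrow> finite \<sigma>"
  unfolding ind_complex_def using finite_subset by blast

lemma ind_down: "\<sigma> \<in> ind_complex V E \<Longrightarrow> \<tau> \<subseteq> \<sigma> \<Longrightarrow> \<tau> \<in> ind_complex V E"
  unfolding ind_complex_def by blast

definition Sset :: "'a set \<Rightarrow> ('a \<Rightarrow> 'a \<Rightarrow> bool) \<Rightarrow> 'a set \<Rightarrow> 'a set" where
  "Sset V E \<tau> = {u \<in> V. u \<notin> \<tau> \<and> insert u \<tau> \<in> ind_complex V E}"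

lemma Sset_finite: "finite V \<Longrightarrow> finite (Sset V E \<tau>)"
  unfolding Sset_def by simp

lemma boundary_ind:
  "boundary (ind_complex V E) k c \<tau> =
    (if \<tau> \<in> faces_dim (ind_complex V E) (k - 1) then
       (\<Sum>u \<in> Sset V E \<tau>. sgnv u \<tau> * c (insert u \<tau>)) else 0)"
proof -
  have "{v \<in> \<Union>(ind_complex V E). v \<notin> \<tau> \<and> insert v \<tau> \<in> ind_complex V E} = Sset V E \<tau>"
    unfolding Sset_def ind_complex_def by blast
  then show ?thesis unfolding boundary_def sgnv_def by simp
qed

lemma boundary_diff:
  "boundary K k (\<lambda>x. f x - g x) \<tau> = boundary K k f \<tau> - boundary K k g \<tau>"
  unfolding boundary_def by (simp add: sum_subtractf algebra_simps)

lemma boundary_add: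
  "boundary K k (\<lambda>x. f x + g x) \<tau> = boundary K k f \<tau> + boundary K k g \<tau>"
  unfolding boundary_def by (simp add: sum.distrib algebra_simps)

lemma boundary_zero: "boundary K k (\<lambda>x. 0) \<tau> = 0"
  unfolding boundary_def by simp

lemma faces_dim_card: "\<sigma> \<in> faces_dim K k \<longleftrightarrow> \<sigma> \<in> K \<and> int (card \<sigma>) = k + 1"
  unfolding faces_dim_def by simp

lemma vanish_low:
  assumes "k \<le> -2"
  shows "reduced_homology_vanishes TYPE('k::field) K k"
proof -
  have "faces_dim K k = {}" using assms unfolding faces_dim_def by auto
  then have "\<And>c::'a set \<Rightarrow> 'k. c \<in> chains K k \<Longrightarrow> c = (\<lambda>x. 0)"
    unfolding chains_def by auto
  moreover have "(\<lambda>x. 0::'k) \<in> boundaries K k"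
    unfolding boundaries_def chains_def
    by (rule image_eqI[where x="\<lambda>x. 0"]) (auto simp: boundary_def fun_eq_iff)
  ultimately show ?thesis unfolding reduced_homology_vanishes_def cycles_def by auto
qed



lemma ind_mono: "V' \<subseteq> V \<Longrightarrow> ind_complex V' E \<subseteq> ind_complex V E"
  unfolding ind_complex_def by blast

lemma ind_sub: "V' \<subseteq> V \<Longrightarrow> \<sigma> \<in> ind_complex V' E \<longleftrightarrow> \<sigma> \<in> ind_complex V E \<and> \<sigma> \<subseteq> V'"
  unfolding ind_complex_def by blast

lemma chains_mono: "V' \<subseteq> V \<Longrightarrow> c \<in> chains (ind_complex V' E) j \<Longrightarrow> c \<in> chains (ind_complex V E) j"
  unfolding chains_def faces_dim_def using ind_mono by blast

lemma boundary_sub: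
  fixes c :: "'a::linorder set \<Rightarrow> 'k::field"
  assumes V: "finite V" and sub: "V' \<subseteq> V" and c: "c \<in> chains (ind_complex V' E) j"
  shows "boundary (ind_complex V' E) j c \<tau> = boundary (ind_complex V E) j c \<tau>"
proof -
  let ?L = "ind_complex V' E" and ?K = "ind_complex V E"
  have V': "finite V'" using V sub finite_subset by blast
  have cz: "\<And>\<rho>. \<rho> \<notin> faces_dim ?L j \<Longrightarrow> c \<rho> = 0" using c unfolding chains_def by blast
  show ?thesis
  proof (cases "\<tau> \<in> faces_dim ?L (j - 1)")
    case True
    then have T2: "\<tau> \<in> faces_dim ?K (j - 1)" using ind_mono[OF sub] unfolding faces_dim_def by blast
    have ss: "Sset V' E \<tau> \<subseteq> Sset V E \<tau>" using ind_mono[OF sub] sub unfolding Sset_def by blast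
    have "(\<Sum>u \<in> Sset V' E \<tau>. sgnv u \<tau> * c (insert u \<tau>)) = (\<Sum>u \<in> Sset V E \<tau>. sgnv u \<tau> * c (insert u \<tau>))"
    proof (rule sum.mono_neutral_left[OF Sset_finite[OF V] ss])
      show "\<forall>i\<in>Sset V E \<tau> - Sset V' E \<tau>. sgnv i \<tau> * c (insert i \<tau>) = 0"
      proof
        fix u assume u: "u \<in> Sset V E \<tau> - Sset V' E \<tau>"
        have "insert u \<tau> \<notin> ?L"
        proof
          assume "insert u \<tau> \<in> ?L"
          then have "u \<in> V'" unfolding ind_complex_def by blast
          with u \<open>insert u \<tau> \<in> ?L\<close> show False unfolding Sset_def by blast
        qed
        then show "sgnv u \<tau> * c (insert u \<tau>) = 0" using cz unfolding faces_dim_def by auto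
      qed
    qed
    then show ?thesis unfolding boundary_ind using True T2 by simp
  next
    case False
    show ?thesis
    proof (cases "\<tau> \<in> faces_dim ?K (j - 1)")
      case T: True
      have "(\<Sum>u \<in> Sset V E \<tau>. sgnv u \<tau> * c (insert u \<tau>)) = 0"
      proof (rule sum.neutral, rule ballI)
        fix u assume u: "u \<in> Sset V E \<tau>"
        have "c (insert u \<tau>) = 0"
        proof (rule ccontr)
          assume "c (insert u \<tau>) \<noteq> 0"
          then have in1: "insert u \<tau> \<in> faces_dim ?L j" using cz by blast
          then have "\<tau> \<in> ?L" unfolding faces_dim_def using ind_down by blast
          moreover have "finite \<tau>" using T V ind_finite_face unfolding faces_dim_def by blast
          moreover have "u \<notin> \<tau>" using u unfolding Sset_def by blast
          ultimately have "\<tau> \<in> faces_dim ?L (j - 1)" using in1 unfolding faces_dim_def by auto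
          with False show False by blast
        qed
        then show "sgnv u \<tau> * c (insert u \<tau>) = 0" by simp
      qed
      then show ?thesis unfolding boundary_ind using False T by simp
    next
      case F2: False
      then show ?thesis unfolding boundary_ind using False by simp
    qed
  qed
qed



definition VL :: "'a set \<Rightarrow> ('a \<Rightarrow> 'a \<Rightarrow> bool) \<Rightarrow> 'a \<Rightarrow> 'a set" where
  "VL V E v = V - {v} - {u. E v u}"

lemma L_char:
  assumes sym: "\<forall>x y. E x y \<longrightarrow> E y x" and irr: "\<forall>x. \<not> E x x" and v: "v \<in> V"
  shows "\<sigma> \<in> ind_complex (VL V E v) E \<longleftrightarrow>
     \<sigma> \<in> ind_complex V E \<and> v \<notin> \<sigma> \<and> insert v \<sigma> \<in> ind_complex V E"
  unfolding ind_complex_def VL_def using sym irr v by blast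

definition cone :: "'a::linorder \<Rightarrow> ('a set \<Rightarrow> 'k::field) \<Rightarrow> 'a set \<Rightarrow> 'k" where
  "cone v c \<rho> = (if v \<in> \<rho> then sgnv v (\<rho> - {v}) * c (\<rho> - {v}) else 0)"

lemma cone_insert: "v \<notin> \<sigma> \<Longrightarrow> cone v c (insert v \<sigma>) = sgnv v \<sigma> * c \<sigma>"
  unfolding cone_def by simp

lemma cone_notin: "v \<notin> \<rho> \<Longrightarrow> cone v c \<rho> = 0"
  unfolding cone_def by simp

lemma cone_formula:
  fixes c :: "'a::linorder set \<Rightarrow> 'k::field"
  assumes V: "finite V" and sym: "\<forall>x y. E x y \<longrightarrow> E y x" and irr: "\<forall>x. \<not> E x x" and v: "v \<in> V"
    and c: "c \<in> chains (ind_complex (VL V E v) E) j"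
  shows "boundary (ind_complex V E) (j + 1) (cone v c) \<tau> =
           c \<tau> - cone v (boundary (ind_complex V E) j c) \<tau>"
proof -
  let ?L = "ind_complex (VL V E v) E" and ?K = "ind_complex V E"
  note Lc = L_char[OF sym irr v]
  have cz: "\<And>\<rho>. \<rho> \<notin> faces_dim ?L j \<Longrightarrow> c \<rho> = 0" using c unfolding chains_def by blast
  have cL: "\<And>\<rho>. \<rho> \<notin> ?L \<Longrightarrow> c \<rho> = 0" using cz unfolding faces_dim_def by blast
  show ?thesis
  proof (cases "v \<in> \<tau>")
    case False
    have ct0: "cone v (boundary ?K j c) \<tau> = 0" using False by (rule cone_notin)
    show ?thesis
    proof (cases "\<tau> \<in> faces_dim ?K j")
      case True
      have "(\<Sum>u \<in> Sset V E \<tau>. sgnv u \<tau> * cone v c (insert u \<tau>))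
          = (\<Sum>u \<in> Sset V E \<tau>. if u = v then sgnv v \<tau> * (sgnv v \<tau> * c \<tau>) else 0)"
        by (rule sum.cong) (auto simp: cone_insert False cone_notin)
      also have "\<dots> = (if v \<in> Sset V E \<tau> then sgnv v \<tau> * (sgnv v \<tau> * c \<tau>) else 0)"
        using Sset_finite[OF V] by (simp add: sum.delta')
      also have "\<dots> = c \<tau>"
      proof (cases "v \<in> Sset V E \<tau>")
        case True
        then show ?thesis by (simp add: mult.assoc[symmetric] sgnv_sq)
      next
        case F: False
        then have "insert v \<tau> \<notin> ?K" using v False unfolding Sset_def by blast
        then have "\<tau> \<notin> ?L" using Lc by blast
        then show ?thesis using F cL by simp
      qed
      finally show ?thesis unfolding boundary_ind[of V E "j+1" "cone v c"] using True ct0 by simp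
    next
      case F: False
      then have "\<tau> \<notin> faces_dim ?L j" using ind_mono[of "VL V E v" V E] unfolding VL_def faces_dim_def by blast
      then show ?thesis unfolding boundary_ind[of V E "j+1" "cone v c"] using F ct0 cz by simp
    qed
  next
    case True
    define \<sigma> where "\<sigma> = \<tau> - {v}"
    have t: "\<tau> = insert v \<sigma>" and vs: "v \<notin> \<sigma>" using True unfolding \<sigma>_def by auto
    have ct: "c \<tau> = 0" using cL Lc True by blast
    have rhs: "cone v (boundary ?K j c) \<tau> = sgnv v \<sigma> * boundary ?K j c \<sigma>"
      unfolding t by (rule cone_insert[OF vs])
    show ?thesis
    proof (cases "\<tau> \<in> faces_dim ?K j")
      case T: True
      have fin: "finite \<tau>" using T V ind_finite_face unfolding faces_dim_def by blast
      have fs: "finite \<sigma>" using fin t by simp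
      have sK: "\<sigma> \<in> faces_dim ?K (j - 1)"
        using T ind_down[of \<tau> V E \<sigma>] t vs fs unfolding faces_dim_def by auto
      define T where "T = {u \<in> V. u \<notin> \<tau> \<and> insert u \<sigma> \<in> ?L}"
      have Tfin: "finite T" using V unfolding T_def by simp
      have "(\<Sum>u \<in> Sset V E \<tau>. sgnv u \<tau> * cone v c (insert u \<tau>))
          = (\<Sum>u \<in> Sset V E \<tau>. sgnv u (insert v \<sigma>) * (sgnv v (insert u \<sigma>) * c (insert u \<sigma>)))"
      proof (rule sum.cong[OF refl])
        fix u assume u: "u \<in> Sset V E \<tau>"
        then have "u \<noteq> v" using True unfolding Sset_def by blast
        then have "insert u \<tau> = insert v (insert u \<sigma>)" "v \<notin> insert u \<sigma>" using t vs by auto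
        then show "sgnv u \<tau> * cone v c (insert u \<tau>) = sgnv u (insert v \<sigma>) * (sgnv v (insert u \<sigma>) * c (insert u \<sigma>))"
          using t by (simp add: cone_insert)
      qed
      also have "\<dots> = (\<Sum>u \<in> T. sgnv u (insert v \<sigma>) * (sgnv v (insert u \<sigma>) * c (insert u \<sigma>)))"
      proof (rule sum.mono_neutral_right[OF Sset_finite[OF V]])
        show "T \<subseteq> Sset V E \<tau>" unfolding T_def Sset_def
        proof safe
          fix u assume "u \<in> V" "u \<notin> \<tau>" "insert u \<sigma> \<in> ?L"
          then have "insert v (insert u \<sigma>) \<in> ?K" using Lc by blast
          then show "insert u \<tau> \<in> ?K" using t by (simp add: insert_commute)
        qed
        show "\<forall>i\<in>Sset V E \<tau> - T. sgnv i (insert v \<sigma>) * (sgnv v (insert i \<sigma>) * c (insert i \<sigma>)) = 0"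
          using cL unfolding T_def Sset_def by auto
      qed
      also have "\<dots> = (\<Sum>u \<in> T. - (sgnv v \<sigma> * (sgnv u \<sigma> * c (insert u \<sigma>))))"
      proof (rule sum.cong[OF refl])
        fix u assume "u \<in> T"
        then have "u \<notin> \<sigma>" "u \<noteq> v" using t unfolding T_def by auto
        from sgnv_swap[OF fs this(1) vs this(2)]
        show "sgnv u (insert v \<sigma>) * (sgnv v (insert u \<sigma>) * c (insert u \<sigma>)) = - (sgnv v \<sigma> * (sgnv u \<sigma> * c (insert u \<sigma>)))"
          by (metis (no_types, lifting) mult.assoc mult_minus_left)
      qed
      also have "\<dots> = - (sgnv v \<sigma> * (\<Sum>u \<in> T. sgnv u \<sigma> * c (insert u \<sigma>)))"
        by (simp add: sum_negf sum_distrib_left)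
      also have "(\<Sum>u \<in> T. sgnv u \<sigma> * c (insert u \<sigma>)) = (\<Sum>u \<in> Sset V E \<sigma>. sgnv u \<sigma> * c (insert u \<sigma>))"
      proof (rule sum.mono_neutral_left[OF Sset_finite[OF V]])
        show "T \<subseteq> Sset V E \<sigma>" unfolding T_def Sset_def using t Lc by blast
        show "\<forall>i\<in>Sset V E \<sigma> - T. sgnv i \<sigma> * c (insert i \<sigma>) = 0"
        proof
          fix u assume u: "u \<in> Sset V E \<sigma> - T"
          have "insert u \<sigma> \<notin> ?L"
          proof (cases "u = v")
            case True then show ?thesis using t Lc by auto
          next
            case False then show ?thesis using u t unfolding T_def Sset_def by auto
          qed
          then show "sgnv u \<sigma> * c (insert u \<sigma>) = 0" using cL by simp
        qed
      qed
      finally show ?thesis unfolding boundary_ind[of V E "j+1" "cone v c"] rhs boundary_ind[of V E j]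
        using T sK ct by simp
    next
      case F: False
      have "boundary ?K j c \<sigma> = 0"
      proof (cases "\<sigma> \<in> faces_dim ?K (j - 1)")
        case sK: True
        have fs: "finite \<sigma>" using sK V ind_finite_face unfolding faces_dim_def by blast
        have "(\<Sum>u \<in> Sset V E \<sigma>. sgnv u \<sigma> * c (insert u \<sigma>)) = 0"
        proof (rule sum.neutral, rule ballI)
          fix u assume u: "u \<in> Sset V E \<sigma>"
          have "insert u \<sigma> \<notin> ?L"
          proof
            assume "insert u \<sigma> \<in> ?L"
            then have "insert v (insert u \<sigma>) \<in> ?K" using Lc by blast
            then have "\<tau> \<in> ?K" using t ind_down by blast
            moreover have "int (card \<tau>) = j + 1" using sK t vs fs unfolding faces_dim_def by auto
            ultimately show False using F unfolding faces_dim_def by blast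
          qed
          then show "sgnv u \<sigma> * c (insert u \<sigma>) = 0" using cL by simp
        qed
        then show ?thesis unfolding boundary_ind using sK by simp
      next
        case False then show ?thesis unfolding boundary_ind by simp
      qed
      then show ?thesis unfolding boundary_ind[of V E "j+1" "cone v c"] rhs using F ct by simp
    qed
  qed
qed



definition uncone :: "'a::linorder \<Rightarrow> ('a set \<Rightarrow> 'k::field) \<Rightarrow> 'a set \<Rightarrow> 'k" where
  "uncone v z \<sigma> = (if v \<notin> \<sigma> then sgnv v \<sigma> * z (insert v \<sigma>) else 0)"

definition restr :: "'a \<Rightarrow> ('a set \<Rightarrow> 'k::field) \<Rightarrow> 'a set \<Rightarrow> 'k" where
  "restr v z \<sigma> = (if v \<notin> \<sigma> then z \<sigma> else 0)"

lemma decomp: "z \<rho> = cone v (uncone v z) \<rho> + restr v z \<rho>"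
proof (cases "v \<in> \<rho>")
  case True
  then have "insert v (\<rho> - {v}) = \<rho>" by auto
  then show ?thesis using True unfolding cone_def uncone_def restr_def
    by (simp add: mult.assoc[symmetric] sgnv_sq)
qed (simp add: cone_def restr_def)

lemma boundary_vanish_v:
  assumes "\<forall>\<rho>. v \<in> \<rho> \<longrightarrow> c \<rho> = 0" "v \<in> \<tau>"
  shows "boundary K j c \<tau> = 0"
  unfolding boundary_def using assms by simp

lemma uncone_chain:
  assumes sym: "\<forall>x y. E x y \<longrightarrow> E y x" and irr: "\<forall>x. \<not> E x x" and v: "v \<in> V" and V: "finite V"
    and z: "z \<in> chains (ind_complex V E) k"
  shows "uncone v z \<in> chains (ind_complex (VL V E v) E) (k - 1)"
  unfolding chains_def
proof (safe)
  fix \<sigma> assume s: "\<sigma> \<notin> faces_dim (ind_complex (VL V E v) E) (k - 1)"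
  show "uncone v z \<sigma> = 0"
  proof (cases "v \<in> \<sigma>")
    case False
    have "z (insert v \<sigma>) = 0"
    proof (rule ccontr)
      assume "z (insert v \<sigma>) \<noteq> 0"
      then have f: "insert v \<sigma> \<in> faces_dim (ind_complex V E) k" using z unfolding chains_def by blast
      then have "\<sigma> \<in> ind_complex V E" using ind_down unfolding faces_dim_def by blast
      then have "\<sigma> \<in> ind_complex (VL V E v) E" using L_char[OF sym irr v] f False unfolding faces_dim_def by blast
      moreover have "finite \<sigma>" using \<open>\<sigma> \<in> ind_complex V E\<close> V ind_finite_face by blast
      ultimately show False using s f False unfolding faces_dim_def by auto
    qed
    then show ?thesis unfolding uncone_def by simp
  qed (simp add: uncone_def)
qed

lemma restr_chain:
  assumes z: "z \<in> chains (ind_complex V E) k"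
  shows "restr v z \<in> chains (ind_complex (V - {v}) E) k"
  unfolding chains_def
proof safe
  fix \<sigma> assume s: "\<sigma> \<notin> faces_dim (ind_complex (V - {v}) E) k"
  show "restr v z \<sigma> = 0"
  proof (cases "v \<in> \<sigma>")
    case False
    have "\<sigma> \<notin> faces_dim (ind_complex V E) k"
    proof
      assume a: "\<sigma> \<in> faces_dim (ind_complex V E) k"
      then have a1: "\<sigma> \<in> ind_complex V E" "int (card \<sigma>) = k + 1" unfolding faces_dim_def by auto
      then have "\<sigma> \<subseteq> V" unfolding ind_complex_def by auto
      then have "\<sigma> \<subseteq> V - {v}" using False by auto
      then have "\<sigma> \<in> ind_complex (V - {v}) E" using a1(1) ind_sub[of "V - {v}" V \<sigma> E] by auto
      then show False using s a1(2) unfolding faces_dim_def by auto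
    qed
    then have "z \<sigma> = 0" using z unfolding chains_def by blast
    then show ?thesis using False unfolding restr_def by simp
  next
    case True then show ?thesis by (simp add: restr_def)
  qed
qed

lemma cone_chain:
  assumes sym: "\<forall>x y. E x y \<longrightarrow> E y x" and irr: "\<forall>x. \<not> E x x" and v: "v \<in> V" and V: "finite V"
    and c: "c \<in> chains (ind_complex (VL V E v) E) j"
  shows "cone v c \<in> chains (ind_complex V E) (j + 1)"
  unfolding chains_def
proof safe
  fix \<rho> assume r: "\<rho> \<notin> faces_dim (ind_complex V E) (j + 1)"
  show "cone v c \<rho> = 0"
  proof (cases "v \<in> \<rho>")
    case True
    define \<sigma> where "\<sigma> = \<rho> - {v}"
    have t: "\<rho> = insert v \<sigma>" and vs: "v \<notin> \<sigma>" using True unfolding \<sigma>_def by auto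
    have "c \<sigma> = 0"
    proof (rule ccontr)
      assume "c \<sigma> \<noteq> 0"
      then have f: "\<sigma> \<in> faces_dim (ind_complex (VL V E v) E) j" using c unfolding chains_def by blast
      then have f1: "\<sigma> \<in> ind_complex (VL V E v) E" "int (card \<sigma>) = j + 1" unfolding faces_dim_def by auto
      then have "\<rho> \<in> ind_complex V E" using L_char[OF sym irr v] t by blast
      moreover have "finite (VL V E v)" using V unfolding VL_def by simp
      then have "finite \<sigma>" using f1(1) ind_finite_face by blast
      then have "int (card \<rho>) = j + 2" using t vs f1(2) by simp
      ultimately have "\<rho> \<in> faces_dim (ind_complex V E) (j + 1)" unfolding faces_dim_def by simp
      then show False using r by blast
    qed
    then show ?thesis using vs unfolding t by (simp add: cone_insert)
  next
    case False then show ?thesis by (simp add: cone_notin)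
  qed
qed

lemma cycle_facts:
  fixes z :: "'a::linorder set \<Rightarrow> 'k::field"
  assumes V: "finite V" and sym: "\<forall>x y. E x y \<longrightarrow> E y x" and irr: "\<forall>x. \<not> E x x" and v: "v \<in> V"
    and z: "z \<in> cycles (ind_complex V E) k"
  shows "\<forall>\<tau>. boundary (ind_complex V E) (k - 1) (uncone v z) \<tau> = 0"
    and "\<forall>\<tau>. uncone v z \<tau> + boundary (ind_complex V E) k (restr v z) \<tau> = 0"
proof -
  let ?K = "ind_complex V E"
  define z1 where "z1 = uncone v z"
  define z2 where "z2 = restr v z"
  have zc: "z \<in> chains ?K k" and bz: "\<And>\<tau>. boundary ?K k z \<tau> = 0" using z unfolding cycles_def by auto
  have z1c: "z1 \<in> chains (ind_complex (VL V E v) E) (k - 1)"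
    unfolding z1_def by (rule uncone_chain[OF sym irr v V zc])
  have zeq: "z = (\<lambda>\<rho>. cone v z1 \<rho> + z2 \<rho>)" unfolding z1_def z2_def using decomp by blast
  have eq: "z1 \<tau> - cone v (boundary ?K (k - 1) z1) \<tau> + boundary ?K k z2 \<tau> = 0" for \<tau>
  proof -
    have "0 = boundary ?K k z \<tau>" using bz by simp
    also have "\<dots> = boundary ?K k (cone v z1) \<tau> + boundary ?K k z2 \<tau>"
      by (subst zeq) (rule boundary_add)
    also have "boundary ?K k (cone v z1) \<tau> = z1 \<tau> - cone v (boundary ?K (k - 1) z1) \<tau>"
      using cone_formula[OF V sym irr v z1c, of \<tau>] by simp
    finally show ?thesis by simp
  qed
  have z1v: "\<forall>\<rho>. v \<in> \<rho> \<longrightarrow> z1 \<rho> = 0" unfolding z1_def uncone_def by simp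
  have z2v: "\<forall>\<rho>. v \<in> \<rho> \<longrightarrow> z2 \<rho> = 0" unfolding z2_def restr_def by simp
  have b1: "boundary ?K (k - 1) z1 \<sigma> = 0" for \<sigma>
  proof (cases "v \<in> \<sigma>")
    case True then show ?thesis by (rule boundary_vanish_v[OF z1v])
  next
    case False
    have "z1 (insert v \<sigma>) = 0" "boundary ?K k z2 (insert v \<sigma>) = 0"
      using z1v boundary_vanish_v[OF z2v] by auto
    then have "cone v (boundary ?K (k - 1) z1) (insert v \<sigma>) = 0" using eq[of "insert v \<sigma>"] by simp
    then have "sgnv v \<sigma> * boundary ?K (k - 1) z1 \<sigma> = 0" using cone_insert[OF False] by metis
    then show ?thesis using sgnv_nz by (metis mult_eq_0_iff)
  qed
  then show "\<forall>\<tau>. boundary ?K (k - 1) (uncone v z) \<tau> = 0" unfolding z1_def by blast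
  have "cone v (boundary ?K (k - 1) z1) \<tau> = 0" for \<tau> unfolding cone_def using b1 by simp
  then show "\<forall>\<tau>. uncone v z \<tau> + boundary ?K k (restr v z) \<tau> = 0"
    using eq unfolding z1_def z2_def by simp
qed

lemma cone_vanish:
  assumes V: "finite V" and sym: "\<forall>x y. E x y \<longrightarrow> E y x" and irr: "\<forall>x. \<not> E x x" and v: "v \<in> V"
    and iso: "\<forall>u\<in>V. \<not> E v u"
  shows "reduced_homology_vanishes TYPE('k::field) (ind_complex V E) k"
  unfolding reduced_homology_vanishes_def
proof
  let ?K = "ind_complex V E"
  fix z :: "'a set \<Rightarrow> 'k" assume z: "z \<in> cycles ?K k"
  have zc: "z \<in> chains ?K k" using z unfolding cycles_def by auto
  have VLe: "VL V E v = V - {v}" using iso unfolding VL_def by auto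
  have z2c: "restr v z \<in> chains (ind_complex (VL V E v) E) k"
    unfolding VLe by (rule restr_chain[OF zc])
  note cf = cycle_facts(2)[OF V sym irr v z]
  have "z \<tau> = boundary ?K (k + 1) (cone v (restr v z)) \<tau>" for \<tau>
  proof -
    have "cone v (boundary ?K k (restr v z)) \<tau> = - cone v (uncone v z) \<tau>"
    proof (cases "v \<in> \<tau>")
      case True
      have "boundary ?K k (restr v z) (\<tau> - {v}) = - uncone v z (\<tau> - {v})"
        using cf by (metis add_eq_0_iff add.commute)
      then show ?thesis unfolding cone_def using True by simp
    qed (simp add: cone_def)
    then show ?thesis using cone_formula[OF V sym irr v z2c, of \<tau>] decomp[of z \<tau> v] by simp
  qed
  moreover have "cone v (restr v z) \<in> chains ?K (k + 1)" by (rule cone_chain[OF sym irr v V z2c])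
  ultimately show "z \<in> boundaries ?K k" unfolding boundaries_def by (auto simp: fun_eq_iff)
qed



lemma chains_add: "f \<in> chains K k \<Longrightarrow> g \<in> chains K k \<Longrightarrow> (\<lambda>x. f x + g x) \<in> chains K k"
  unfolding chains_def by simp

lemma chains_diff: "f \<in> chains K k \<Longrightarrow> g \<in> chains K k \<Longrightarrow> (\<lambda>x. f x - g x) \<in> chains K k"
  unfolding chains_def by simp

lemma VL_sub: "VL V E v \<subseteq> V" "VL V E v \<subseteq> V - {v}" unfolding VL_def by auto

lemma main_step:
  assumes V: "finite V" and sym: "\<forall>x y. E x y \<longrightarrow> E y x" and irr: "\<forall>x. \<not> E x x" and v: "v \<in> V"
    and HD: "reduced_homology_vanishes TYPE('k::field) (ind_complex (V - {v}) E) k"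
    and HL: "reduced_homology_vanishes TYPE('k) (ind_complex (VL V E v) E) (k - 1)"
  shows "reduced_homology_vanishes TYPE('k) (ind_complex V E) k"
  unfolding reduced_homology_vanishes_def
proof
  let ?K = "ind_complex V E" and ?L = "ind_complex (VL V E v) E" and ?D = "ind_complex (V - {v}) E"
  fix z :: "'a set \<Rightarrow> 'k" assume z: "z \<in> cycles ?K k"
  have zc: "z \<in> chains ?K k" using z unfolding cycles_def by auto
  define z1 where "z1 = uncone v z"
  define z2 where "z2 = restr v z"
  have z1c: "z1 \<in> chains ?L (k - 1)" unfolding z1_def by (rule uncone_chain[OF sym irr v V zc])
  have z2c: "z2 \<in> chains ?D k" unfolding z2_def by (rule restr_chain[OF zc])
  have b1: "\<And>\<tau>. boundary ?K (k - 1) z1 \<tau> = 0" using cycle_facts(1)[OF V sym irr v z] unfolding z1_def by blast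
  have b2: "\<And>\<tau>. z1 \<tau> + boundary ?K k z2 \<tau> = 0" using cycle_facts(2)[OF V sym irr v z] unfolding z1_def z2_def by blast
  have "z1 \<in> cycles ?L (k - 1)"
    unfolding cycles_def using z1c b1 boundary_sub[OF V VL_sub(1) z1c] by simp
  then have "z1 \<in> boundaries ?L (k - 1)" using HL unfolding reduced_homology_vanishes_def by blast
  then obtain w1 where w1c: "w1 \<in> chains ?L k" and w1e: "z1 = boundary ?L k w1"
    unfolding boundaries_def by auto
  have w1b: "boundary ?K k w1 = z1" using w1e boundary_sub[OF V VL_sub(1) w1c] by (simp add: fun_eq_iff)
  define z' where "z' = (\<lambda>x. z2 x + w1 x)"
  have z'c: "z' \<in> chains ?D k" unfolding z'_def
    by (rule chains_add[OF z2c chains_mono[OF VL_sub(2) w1c]])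
  have "z' \<in> cycles ?D k"
  proof -
    have "boundary ?D k z' \<tau> = 0" for \<tau>
    proof -
      have "boundary ?D k z' \<tau> = boundary ?K k z' \<tau>"
        by (rule boundary_sub[OF V _ z'c]) auto
      also have "\<dots> = boundary ?K k z2 \<tau> + boundary ?K k w1 \<tau>" unfolding z'_def by (rule boundary_add)
      also have "\<dots> = 0" using b2[of \<tau>] w1b by (simp add: add.commute)
      finally show ?thesis .
    qed
    then show ?thesis unfolding cycles_def using z'c by simp
  qed
  then have "z' \<in> boundaries ?D k" using HD unfolding reduced_homology_vanishes_def by blast
  then obtain w2 where w2c: "w2 \<in> chains ?D (k + 1)" and w2e: "z' = boundary ?D (k + 1) w2"
    unfolding boundaries_def by auto
  have w2b: "z' \<tau> = boundary ?K (k + 1) w2 \<tau>" for \<tau>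
    using w2e boundary_sub[OF V _ w2c, of \<tau>] by auto
  have cw: "boundary ?K (k + 1) (cone v w1) \<tau> = w1 \<tau> - cone v z1 \<tau>" for \<tau>
    using cone_formula[OF V sym irr v w1c, of \<tau>] w1b by simp
  have "z \<tau> = boundary ?K (k + 1) (\<lambda>x. w2 x - cone v w1 x) \<tau>" for \<tau>
  proof -
    have "z \<tau> = cone v z1 \<tau> + z2 \<tau>" unfolding z1_def z2_def by (rule decomp)
    also have "\<dots> = boundary ?K (k + 1) w2 \<tau> - boundary ?K (k + 1) (cone v w1) \<tau>"
      using cw[of \<tau>] w2b[of \<tau>] unfolding z'_def by (simp add: algebra_simps)
    also have "\<dots> = boundary ?K (k + 1) (\<lambda>x. w2 x - cone v w1 x) \<tau>" by (rule boundary_diff[symmetric])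
    finally show ?thesis .
  qed
  moreover have "(\<lambda>x. w2 x - cone v w1 x) \<in> chains ?K (k + 1)"
    by (rule chains_diff[OF chains_mono[OF _ w2c] cone_chain[OF sym irr v V w1c]]) auto
  ultimately show "z \<in> boundaries ?K k" unfolding boundaries_def
    by (intro image_eqI[where x="\<lambda>x. w2 x - cone v w1 x"]) (auto simp: fun_eq_iff)
qed



definition sep :: "'a set \<Rightarrow> ('a \<Rightarrow> 'a \<Rightarrow> bool) \<Rightarrow> 'a set \<Rightarrow> bool" where
  "sep V E A \<longleftrightarrow> (\<forall>a\<in>A. \<forall>b\<in>A. a \<noteq> b \<longrightarrow> \<not> E a b \<and> (\<forall>c\<in>V. \<not> (E a c \<and> E c b)))"

lemma general:
  assumes "finite V" and sym: "\<forall>x y. E x y \<longrightarrow> E y x" and irr: "\<forall>x. \<not> E x x"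
  shows "A \<subseteq> V \<Longrightarrow> sep V E A \<Longrightarrow> k \<le> int (card A) - 2 \<Longrightarrow>
    reduced_homology_vanishes TYPE('k::field) (ind_complex V (E :: 'a::linorder \<Rightarrow> _)) k"
  using assms(1)
proof (induction V arbitrary: A k rule: finite_psubset_induct)
  case (psubset V)
  show ?case
  proof (cases "k \<le> -2")
    case True then show ?thesis by (rule vanish_low)
  next
    case False
    then have "A \<noteq> {}" using psubset.prems(3) by auto
    then obtain a where aA: "a \<in> A" by blast
    have aV: "a \<in> V" using aA psubset.prems(1) by blast
    have finA: "finite A" using psubset.prems(1) psubset.hyps(1) finite_subset by blast
    show ?thesis
    proof (cases "\<forall>u\<in>V. \<not> E a u")
      case True then show ?thesis using cone_vanish[OF psubset.hyps(1) sym irr aV] by blast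
    next
      case False
      then obtain v where vV: "v \<in> V" and av: "E a v" by blast
      have vA: "v \<notin> A"
      proof
        assume "v \<in> A"
        moreover have "v \<noteq> a" using av irr by blast
        ultimately have "\<not> E a v" using psubset.prems(2) aA unfolding sep_def by metis
        then show False using av by blast
      qed
      show ?thesis
      proof (rule main_step[OF psubset.hyps(1) sym irr vV])
        show "reduced_homology_vanishes TYPE('k) (ind_complex (V - {v}) E) k"
        proof (rule psubset.IH)
          show "V - {v} \<subset> V" using vV by blast
          show "A \<subseteq> V - {v}" using psubset.prems(1) vA by blast
          show "sep (V - {v}) E A" using psubset.prems(2) unfolding sep_def by blast
          show "k \<le> int (card A) - 2" by (rule psubset.prems(3))
        qed
        show "reduced_homology_vanishes TYPE('k) (ind_complex (VL V E v) E) (k - 1)"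
        proof (rule psubset.IH)
          show "VL V E v \<subset> V" using vV VL_sub(1)[of V E v] unfolding VL_def by blast
          show "A - {a} \<subseteq> VL V E v"
          proof
            fix b assume b: "b \<in> A - {a}"
            have "\<not> E v b"
            proof
              assume "E v b"
              moreover have "b \<in> A" "a \<noteq> b" using b by auto
              ultimately show False using psubset.prems(2) aA av vV unfolding sep_def by metis
            qed
            then show "b \<in> VL V E v" using b vA psubset.prems(1) unfolding VL_def by blast
          qed
          show "sep (VL V E v) E (A - {a})" using psubset.prems(2) unfolding sep_def VL_def by blast
          show "k - 1 \<le> int (card (A - {a})) - 2"
            using psubset.prems(3) finA aA by (simp add: card_Diff_singleton)
        qed
      qed
    qed
  qed
qed

theorem corollary6p12:
  fixes V :: "'a::linorder set" and E :: "'a \<Rightarrow> 'a \<Rightarrow> bool" and A :: "'a set" and k :: int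
  assumes "simple_graph V E"
    and "graph_connected V E"
    and "A \<subseteq> V"
    and "\<forall>u\<in>A. \<forall>v\<in>A. u \<noteq> v \<longrightarrow> gdist V E u v \<ge> 3"
    and "k \<le> int (card A) - 2"
  shows "reduced_homology_vanishes TYPE('k::field) (ind_complex V E) k"
proof -
  have fin: "finite V" and sym: "\<forall>x y. E x y \<longrightarrow> E y x" and irr: "\<forall>x. \<not> E x x"
    and inV: "\<forall>x y. E x y \<longrightarrow> x \<in> V \<and> y \<in> V"
    using assms(1) unfolding simple_graph_def by auto
  have "sep V E A"
    unfolding sep_def
  proof (intro ballI impI conjI)
    fix a b assume a: "a \<in> A" and b: "b \<in> A" and ab: "a \<noteq> b"
    have d: "gdist V E a b \<ge> 3" using assms(4) a b ab by blast
    show "\<not> E a b"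
    proof
      assume e: "E a b"
      then have "walk V E [a, b] \<and> hd [a, b] = a \<and> last [a, b] = b \<and> length [a, b] = Suc 1"
        using inV by auto
      then have "gdist V E a b \<le> 1" unfolding gdist_def by (intro Least_le) blast
      then show False using d by simp
    qed
    show "\<not> (E a c \<and> E c b)" if cV: "c \<in> V" for c
    proof
      assume "E a c \<and> E c b"
      then have "walk V E [a, c, b] \<and> hd [a, c, b] = a \<and> last [a, c, b] = b \<and> length [a, c, b] = Suc 2"
        using inV by auto
      then have "gdist V E a b \<le> 2" unfolding gdist_def by (intro Least_le) blast
      then show False using d by simp
    qed
  qed
  then show ?thesis using general[OF fin sym irr assms(3) _ assms(5)] by blast
qed

end
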